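(* Let $T$ be a finite rooted tree in which every inner node has at least two children, with node set $V$ and leaf set $L$. Let $S\subseteq V\setminus L$ and let $(\pi,\sigma)$ be a pair of injective maps $S\to L$ identifying $S$ with unique request, and put $A=\pi(S)$, $B=\sigma(S)$. Then for each inner node $x$ exactly one of the following three cases holds: (1) $x\notin S$, $x$ is not requested in $(\pi,\sigma)$, and for each child $c$ of $x$, $|A\cap V(T_c)|=|B\cap V(T_c)|$; (2) $x\notin S$, $x$ is requested in $(\pi,\sigma)$, and there is a leaf $z\in(A\cup B)\cap V(T_x)$ such that for each child $c$ of $x$, $|(A\setminus\{z\})\cap V(T_c)|=|(B\setminus\{z\})\cap V(T_c)|$; (3) $x\in S$, $x$ is requested in $(\pi,\sigma)$, and there are leaves $a\in A\cap V(T_x)$ and $b\in B\cap V(T_x)$ such that for each child $c$ of $x$, $|(A\setminus\{a\})\cap V(T_c)|=|(B\setminus\{b\})\cap V(T_c)|$ and $\{a,b\}\not\subseteq V(T_c)$. In particular, $x\in S$ if and only if there exist $a\in A\cap V(T_x)$ and $b\in B\cap V(T_x)$ such that for each child $c$ of $x$, $|(A\setminus\{a\})\cap V(T_c)|=|(B\setminus\{b\})\cap V(T_c)|$ and $\{a,b\}\not\subseteq V(T_c)$.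
   Context: Every node is its own ancestor and descendant; $T_x$ is the subtree rooted at $x$ and $V(T_x)$ the set of descendants of $x$. A pair $(\pi,\sigma)$ of injective maps from $S\subseteq V\setminus L$ to $L$ identifies $S$ if for each $s\in S$, $s$ is the least common ancestor of $\pi(s)$ and $\sigma(s)$. For $s\in S$, a node $x$ is $s$-requested in $(\pi,\sigma)$ if $x$ lies on the path of $T$ from $\pi(s)$ to $\sigma(s)$; it is requested if it is $s$-requested for some $s\in S$. The pair has unique request if every node is $s$-requested for at most one $s\in S$. *)

theory Defs
  imports Main
begin

definition rooted_tree :: "'a set \<Rightarrow> 'a \<Rightarrow> ('a \<times> 'a) set \<Rightarrow> bool" where
  "rooted_tree V r E \<longleftrightarrow> finite V \<and> r \<in> V \<and> E \<subseteq> V \<times> V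
     \<and> (\<forall>p. (p, r) \<notin> E)
     \<and> (\<forall>v\<in>V. v \<noteq> r \<longrightarrow> (\<exists>!p. (p, v) \<in> E))
     \<and> (\<forall>v\<in>V. (r, v) \<in> E\<^sup>*)"

definition children :: "('a \<times> 'a) set \<Rightarrow> 'a \<Rightarrow> 'a set" where
  "children E x = {c. (x, c) \<in> E}"

definition leaves :: "'a set \<Rightarrow> ('a \<times> 'a) set \<Rightarrow> 'a set" where
  "leaves V E = {v \<in> V. children E v = {}}"

text \<open>Every node is its own ancestor/descendant: x is an ancestor of y iff (x,y) in E^*.
  desc E x is V(T_x), the set of descendants of x.\<close>
definition desc :: "('a \<times> 'a) set \<Rightarrow> 'a \<Rightarrow> 'a set" where
  "desc E x = {y. (x, y) \<in> E\<^sup>*}"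

definition is_lca :: "('a \<times> 'a) set \<Rightarrow> 'a \<Rightarrow> 'a \<Rightarrow> 'a \<Rightarrow> bool" where
  "is_lca E s u w \<longleftrightarrow> (s, u) \<in> E\<^sup>* \<and> (s, w) \<in> E\<^sup>*
     \<and> (\<forall>t. (t, u) \<in> E\<^sup>* \<and> (t, w) \<in> E\<^sup>* \<longrightarrow> (t, s) \<in> E\<^sup>*)"

definition on_path :: "('a \<times> 'a) set \<Rightarrow> 'a \<Rightarrow> 'a \<Rightarrow> 'a \<Rightarrow> bool" where
  "on_path E u w x \<longleftrightarrow> (\<exists>s. is_lca E s u w \<and> (s, x) \<in> E\<^sup>*
     \<and> ((x, u) \<in> E\<^sup>* \<or> (x, w) \<in> E\<^sup>*))"

definition identifies ::
  "'a set \<Rightarrow> ('a \<times> 'a) set \<Rightarrow> 'a set \<Rightarrow> ('a \<Rightarrow> 'a) \<Rightarrow> ('a \<Rightarrow> 'a) \<Rightarrow> bool" where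
  "identifies V E S \<pi> \<sigma> \<longleftrightarrow> S \<subseteq> V - leaves V E
     \<and> inj_on \<pi> S \<and> inj_on \<sigma> S
     \<and> \<pi> ` S \<subseteq> leaves V E \<and> \<sigma> ` S \<subseteq> leaves V E
     \<and> (\<forall>s\<in>S. is_lca E s (\<pi> s) (\<sigma> s))"

definition s_requested :: "('a \<times> 'a) set \<Rightarrow> ('a \<Rightarrow> 'a) \<Rightarrow> ('a \<Rightarrow> 'a) \<Rightarrow> 'a \<Rightarrow> 'a \<Rightarrow> bool" where
  "s_requested E \<pi> \<sigma> s x \<longleftrightarrow> on_path E (\<pi> s) (\<sigma> s) x"

definition requested :: "('a \<times> 'a) set \<Rightarrow> 'a set \<Rightarrow> ('a \<Rightarrow> 'a) \<Rightarrow> ('a \<Rightarrow> 'a) \<Rightarrow> 'a \<Rightarrow> bool" where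
  "requested E S \<pi> \<sigma> x \<longleftrightarrow> (\<exists>s\<in>S. s_requested E \<pi> \<sigma> s x)"

definition unique_request :: "'a set \<Rightarrow> ('a \<times> 'a) set \<Rightarrow> 'a set \<Rightarrow> ('a \<Rightarrow> 'a) \<Rightarrow> ('a \<Rightarrow> 'a) \<Rightarrow> bool" where
  "unique_request V E S \<pi> \<sigma> \<longleftrightarrow> (\<forall>x\<in>V. \<forall>s\<in>S. \<forall>t\<in>S.
     s_requested E \<pi> \<sigma> s x \<and> s_requested E \<pi> \<sigma> t x \<longrightarrow> s = t)"

end

theory Submission imports Defs begin

lemma card_minus_in:
  assumes "finite A" "a \<in> A" "a \<in> D"
  shows "card ((A - {a}) \<inter> D) = card (A \<inter> D) - 1 \<and> card (A \<inter> D) \<ge> 1"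
proof -
  have "(A - {a}) \<inter> D = (A \<inter> D) - {a}" by auto
  moreover have "finite (A \<inter> D)" using assms by auto
  moreover have "a \<in> A \<inter> D" using assms by auto
  ultimately show ?thesis
    by (metis One_nat_def Suc_leI card_Diff_singleton card_gt_0_iff empty_iff)
qed

lemma card_minus_out:
  assumes "a \<notin> A \<inter> D"
  shows "card ((A - {a}) \<inter> D) = card (A \<inter> D)"
proof -
  have "(A - {a}) \<inter> D = A \<inter> D" using assms by auto
  then show ?thesis by simp
qed

lemma L0:
  assumes "finite A" "a \<in> A" "a \<in> D" "b \<notin> D"
    "card (A \<inter> D) = card (B \<inter> D)" "card ((A - {a}) \<inter> D) = card ((B - {b}) \<inter> D)"
  shows False
  using card_minus_in[OF assms(1-3)] card_minus_out[of b B D] assms(4-6) by auto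

lemma LA:
  assumes "finite A" "finite B" "D0 \<inter> D1 = {}" "a \<in> A" "a \<in> D0" "b \<in> B" "b \<in> D1"
    "z \<in> A" "z \<notin> B"
    "card ((A - {a}) \<inter> D0) = card ((B - {b}) \<inter> D0)"
    "card ((A - {a}) \<inter> D1) = card ((B - {b}) \<inter> D1)"
    "card ((A - {z}) \<inter> D0) = card ((B - {z}) \<inter> D0)"
    "card ((A - {z}) \<inter> D1) = card ((B - {z}) \<inter> D1)"
  shows False
proof -
  have b0: "b \<notin> D0" and a1: "a \<notin> D1" using assms(3,5,7) by auto
  have h0: "card (A \<inter> D0) - 1 = card (B \<inter> D0)" "card (A \<inter> D0) \<ge> 1"
    using card_minus_in[OF assms(1,4,5)] card_minus_out[of b B D0] b0 assms(10) by auto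
  have h1: "card (A \<inter> D1) = card (B \<inter> D1) - 1" "card (B \<inter> D1) \<ge> 1"
    using card_minus_in[OF assms(2,6,7)] card_minus_out[of a A D1] a1 assms(11) by auto
  show False
  proof (cases "z \<in> D0")
    case True
    then have "z \<notin> D1" using assms(3) by auto
    then show False using card_minus_out[of z A D1] card_minus_out[of z B D1] assms(13) h1 by auto
  next
    case False
    then show False using card_minus_out[of z A D0] card_minus_out[of z B D0] assms(12) h0 by auto
  qed
qed

lemma bal:
  assumes "inj_on f S'" "inj_on g S'" "\<forall>s\<in>S'. (f s \<in> D \<longleftrightarrow> g s \<in> D)"
  shows "card (f ` S' \<inter> D) = card (g ` S' \<inter> D)"
proof -
  have 1: "f ` S' \<inter> D = f ` {s\<in>S'. f s \<in> D}" by auto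
  have 2: "g ` S' \<inter> D = g ` {s\<in>S'. f s \<in> D}" using assms(3) by auto
  show ?thesis unfolding 1 2
    by (metis (no_types, lifting) assms(1,2) card_image inj_on_subset mem_Collect_eq subsetI)
qed

locale tr =
  fixes V :: "'a set" and r :: 'a and E :: "('a \<times> 'a) set"
  assumes tree: "rooted_tree V r E"
begin

lemma finV: "finite V" and rV: "r \<in> V" and EV: "E \<subseteq> V \<times> V"
  and nopar: "(p, r) \<notin> E" and upar: "\<forall>v\<in>V. v \<noteq> r \<longrightarrow> (\<exists>!p. (p, v) \<in> E)"
  and reach: "\<forall>v\<in>V. (r, v) \<in> E\<^sup>*"
  using tree unfolding rooted_tree_def by auto

lemma uparent: "(p, v) \<in> E \<Longrightarrow> (q, v) \<in> E \<Longrightarrow> p = q"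
proof -
  assume a: "(p, v) \<in> E" "(q, v) \<in> E"
  then have "v \<in> V" "v \<noteq> r" using EV nopar by auto
  then show "p = q" using upar a by metis
qed

lemma acyc_r: "(r, y) \<in> E\<^sup>* \<Longrightarrow> (y, y) \<notin> E\<^sup>+"
proof (induction rule: rtrancl_induct)
  case base
  show ?case
  proof
    assume "(r, r) \<in> E\<^sup>+"
    then show False by (rule tranclE) (use nopar in auto)
  qed
next
  case (step y z)
  show ?case
  proof
    assume "(z, z) \<in> E\<^sup>+"
    then show False
    proof (rule tranclE)
      assume "(z, z) \<in> E"
      then have "z = y" using uparent step(2) by blast
      then show False using step by auto
    next
      fix c assume "(z, c) \<in> E\<^sup>+" "(c, z) \<in> E"
      then have "c = y" using uparent step(2) by blast
      then have "(y, y) \<in> E\<^sup>+" using \<open>(z, c) \<in> E\<^sup>+\<close> step(2) by auto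
      then show False using step by auto
    qed
  qed
qed

lemma acyc: "(y, y) \<notin> E\<^sup>+"
proof
  assume a: "(y, y) \<in> E\<^sup>+"
  then have "y \<in> V" by (rule tranclE) (use EV in auto)
  then show False using reach acyc_r a by auto
qed

lemma antisym: "(x, y) \<in> E\<^sup>* \<Longrightarrow> (y, x) \<in> E\<^sup>* \<Longrightarrow> x = y"
  by (metis acyc rtrancl_eq_or_trancl rtrancl_trancl_trancl)

lemma lin: "(a, v) \<in> E\<^sup>* \<Longrightarrow> (b, v) \<in> E\<^sup>* \<Longrightarrow> (a, b) \<in> E\<^sup>* \<or> (b, a) \<in> E\<^sup>*"
proof (induction arbitrary: b rule: rtrancl_induct)
  case base
  then show ?case by auto
next
  case (step y z)
  from step(4) show ?case
  proof (cases rule: rtranclE)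
    case base
    then show ?thesis using step by auto
  next
    case (step p)
    then have "p = y" using uparent \<open>(y, z) \<in> E\<close> by blast
    then show ?thesis using step(1) \<open>\<And>b. (b, y) \<in> E\<^sup>* \<Longrightarrow> (a, b) \<in> E\<^sup>* \<or> (b, a) \<in> E\<^sup>*\<close> by blast
  qed
qed

lemma desc_split: "(x, y) \<in> E\<^sup>* \<Longrightarrow> y \<noteq> x \<Longrightarrow> \<exists>c. (x, c) \<in> E \<and> (c, y) \<in> E\<^sup>*"
  by (erule converse_rtranclE) auto

lemma not_in_child: "(x, c) \<in> E \<Longrightarrow> (c, x) \<in> E\<^sup>* \<Longrightarrow> False"
proof -
  assume "(x, c) \<in> E" "(c, x) \<in> E\<^sup>*"
  then have "(x, x) \<in> E\<^sup>+" by (rule rtrancl_into_trancl2)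
  then show False using acyc by blast
qed

lemma up_to_parent: "(s, c) \<in> E\<^sup>* \<Longrightarrow> s \<noteq> c \<Longrightarrow> (x, c) \<in> E \<Longrightarrow> (s, x) \<in> E\<^sup>*"
proof -
  assume a: "(s, c) \<in> E\<^sup>*" "s \<noteq> c" "(x, c) \<in> E"
  from a(1) show ?thesis
  proof (cases rule: rtranclE)
    case base then show ?thesis using a by simp
  next
    case (step p) then show ?thesis using uparent[OF step(2) a(3)] by simp
  qed
qed

lemma child_disj: "(x, c0) \<in> E \<Longrightarrow> (x, c1) \<in> E \<Longrightarrow> c0 \<noteq> c1 \<Longrightarrow> (c0, y) \<in> E\<^sup>* \<Longrightarrow> (c1, y) \<in> E\<^sup>* \<Longrightarrow> False"
proof -
  assume a: "(x, c0) \<in> E" "(x, c1) \<in> E" "c0 \<noteq> c1" "(c0, y) \<in> E\<^sup>*" "(c1, y) \<in> E\<^sup>*"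
  from lin[OF a(4,5)] show False
  proof
    assume "(c0, c1) \<in> E\<^sup>*"
    then have "(c0, x) \<in> E\<^sup>*" using up_to_parent a(2,3) by blast
    then show False using not_in_child a(1) by blast
  next
    assume "(c1, c0) \<in> E\<^sup>*"
    then have "(c1, x) \<in> E\<^sup>*" using up_to_parent a(1,3) by blast
    then show False using not_in_child a(2) by blast
  qed
qed

lemma leaf_anc: "l \<in> leaves V E \<Longrightarrow> (l, y) \<in> E\<^sup>* \<Longrightarrow> y = l"
  unfolding leaves_def children_def by (erule converse_rtranclE) auto

lemma lca_uniq: "is_lca E s u w \<Longrightarrow> is_lca E s' u w \<Longrightarrow> s = s'"
  unfolding is_lca_def using antisym by blast

lemma K0:
  assumes "is_lca E s u w" "(x, c) \<in> E" "(c, u) \<in> E\<^sup>*" "(c, w) \<notin> E\<^sup>*"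
  shows "(s, x) \<in> E\<^sup>* \<and> (x, u) \<in> E\<^sup>*"
proof -
  have su: "(s, u) \<in> E\<^sup>*" "(s, w) \<in> E\<^sup>*" using assms(1) unfolding is_lca_def by auto
  have "(s, c) \<in> E\<^sup>*"
    using lin[OF su(1) assms(3)] assms(4) su(2) rtrancl_trans[of c s E w] by blast
  moreover have "s \<noteq> c" using assms(4) su(2) by auto
  ultimately show ?thesis using up_to_parent[of s c x] assms(2,3) converse_rtrancl_into_rtrancl[of x c E u] by blast
qed

end

theorem lemma3p5:
  fixes V :: "'a set" and r :: 'a and E :: "('a \<times> 'a) set"
    and S :: "'a set" and \<pi> \<sigma> :: "'a \<Rightarrow> 'a" and x :: 'a
  assumes tree: "rooted_tree V r E"
    and branching: "\<forall>v \<in> V - leaves V E. 2 \<le> card (children E v)"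
    and ident: "identifies V E S \<pi> \<sigma>"
    and uniq: "unique_request V E S \<pi> \<sigma>"
    and inner: "x \<in> V - leaves V E"
  defines "A \<equiv> \<pi> ` S" and "B \<equiv> \<sigma> ` S"
  defines "C1 \<equiv> x \<notin> S \<and> \<not> requested E S \<pi> \<sigma> x
              \<and> (\<forall>c \<in> children E x. card (A \<inter> desc E c) = card (B \<inter> desc E c))"
    and "C2 \<equiv> x \<notin> S \<and> requested E S \<pi> \<sigma> x
              \<and> (\<exists>z \<in> (A \<union> B) \<inter> desc E x. z \<in> leaves V E \<and>
                   (\<forall>c \<in> children E x. card ((A - {z}) \<inter> desc E c) = card ((B - {z}) \<inter> desc E c)))"
    and "C3 \<equiv> x \<in> S \<and> requested E S \<pi> \<sigma> x
              \<and> (\<exists>a \<in> A \<inter> desc E x. \<exists>b \<in> B \<inter> desc E x. a \<in> leaves V E \<and> b \<in> leaves V E \<and>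
                   (\<forall>c \<in> children E x. card ((A - {a}) \<inter> desc E c) = card ((B - {b}) \<inter> desc E c)
                      \<and> \<not> {a, b} \<subseteq> desc E c))"
  shows "(C1 \<or> C2 \<or> C3) \<and> \<not> (C1 \<and> C2) \<and> \<not> (C1 \<and> C3) \<and> \<not> (C2 \<and> C3)
         \<and> (x \<in> S \<longleftrightarrow> (\<exists>a \<in> A \<inter> desc E x. \<exists>b \<in> B \<inter> desc E x.
               (\<forall>c \<in> children E x. card ((A - {a}) \<inter> desc E c) = card ((B - {b}) \<inter> desc E c)
                  \<and> \<not> {a, b} \<subseteq> desc E c)))"
proof -
  interpret tr V r E using tree by (rule tr.intro)
  have Sinner: "S \<subseteq> V - leaves V E" and injp: "inj_on \<pi> S" and injs: "inj_on \<sigma> S"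
    and pl: "\<pi> ` S \<subseteq> leaves V E" and sl: "\<sigma> ` S \<subseteq> leaves V E"
    and lca: "\<forall>s\<in>S. is_lca E s (\<pi> s) (\<sigma> s)"
    using ident unfolding identifies_def by auto
  have leavesV: "leaves V E \<subseteq> V" unfolding leaves_def by auto
  have finA: "finite A" and finB: "finite B"
    using pl sl leavesV finV unfolding A_def B_def by (auto intro: finite_subset)
  have sreq: "s_requested E \<pi> \<sigma> s y \<longleftrightarrow> (s, y) \<in> E\<^sup>* \<and> ((y, \<pi> s) \<in> E\<^sup>* \<or> (y, \<sigma> s) \<in> E\<^sup>*)"
    if "s \<in> S" for s y
  proof -
    have l: "is_lca E s (\<pi> s) (\<sigma> s)" using lca that by auto
    show ?thesis unfolding s_requested_def on_path_def
      using lca_uniq[OF l] l by blast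
  qed
  have uq: "s = t" if "s \<in> S" "t \<in> S" "y \<in> V" "s_requested E \<pi> \<sigma> s y" "s_requested E \<pi> \<sigma> t y" for s t y
    using uniq that unfolding unique_request_def by blast
  have anc: "(s, \<pi> s) \<in> E\<^sup>*" "(s, \<sigma> s) \<in> E\<^sup>*" if "s \<in> S" for s
    using lca that unfolding is_lca_def by auto
  have ps_ne: "\<pi> s \<noteq> \<sigma> t" if "s \<in> S" "t \<in> S" for s t
  proof
    assume eq: "\<pi> s = \<sigma> t"
    have pV: "\<pi> s \<in> V" using pl leavesV that by auto
    have "s_requested E \<pi> \<sigma> s (\<pi> s)" using sreq[OF that(1)] anc[OF that(1)] by auto
    moreover have "s_requested E \<pi> \<sigma> t (\<pi> s)" using sreq[OF that(2)] anc[OF that(2)] eq by auto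
    ultimately have "s = t" using uq that pV by blast
    then have "\<pi> s = \<sigma> s" using eq by simp
    then have "(\<pi> s, s) \<in> E\<^sup>*" using lca that(1) unfolding is_lca_def by auto
    then have "s = \<pi> s" using antisym anc[OF that(1)] by blast
    then show False using Sinner pl that(1) by auto
  qed
  have disj: "A \<inter> B = {}" unfolding A_def B_def using ps_ne by auto
  have K: "s_requested E \<pi> \<sigma> s x"
    if "s \<in> S" "c \<in> children E x" "\<not> (\<pi> s \<in> desc E c \<longleftrightarrow> \<sigma> s \<in> desc E c)" for s c
  proof -
    have l: "is_lca E s (\<pi> s) (\<sigma> s)" using lca that by auto
    have l': "is_lca E s (\<sigma> s) (\<pi> s)" using l unfolding is_lca_def by blast
    have xc: "(x, c) \<in> E" using that(2) unfolding children_def by auto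
    show ?thesis
    proof (cases "\<pi> s \<in> desc E c")
      case True
      then show ?thesis using K0[OF l xc] that(3) sreq[OF that(1)] unfolding desc_def by auto
    next
      case False
      then show ?thesis using K0[OF l' xc] that(3) sreq[OF that(1)] unfolding desc_def by auto
    qed
  qed
  have xV: "x \<in> V" and xnl: "x \<notin> leaves V E" using inner by auto
  have childE: "(x, c) \<in> E" if "c \<in> children E x" for c using that unfolding children_def by auto
  have child_sub: "(x, y) \<in> E\<^sup>*" if "c \<in> children E x" "y \<in> desc E c" for c y
    using that childE[OF that(1)] converse_rtrancl_into_rtrancl[of x c E y] unfolding desc_def by blast
  have bal_other: "\<forall>s\<in>S - {s0}. (\<pi> s \<in> desc E c \<longleftrightarrow> \<sigma> s \<in> desc E c)"
    if "s0 \<in> S" "s_requested E \<pi> \<sigma> s0 x" "c \<in> children E x" for s0 c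
    using K that uq xV by blast

  have F3: C3 if xS: "x \<in> S"
  proof -
    have rx: "s_requested E \<pi> \<sigma> x x" using sreq[OF xS] anc[OF xS] by auto
    have "requested E S \<pi> \<sigma> x" unfolding requested_def using rx xS by blast
    moreover have "\<pi> x \<in> A \<inter> desc E x" "\<sigma> x \<in> B \<inter> desc E x"
      using anc[OF xS] xS unfolding A_def B_def desc_def by auto
    moreover have "\<pi> x \<in> leaves V E" "\<sigma> x \<in> leaves V E" using pl sl xS by auto
    moreover have "card ((A - {\<pi> x}) \<inter> desc E c) = card ((B - {\<sigma> x}) \<inter> desc E c)
                      \<and> \<not> {\<pi> x, \<sigma> x} \<subseteq> desc E c" if c: "c \<in> children E x" for c
    proof
      have "A - {\<pi> x} = \<pi> ` (S - {x})" "B - {\<sigma> x} = \<sigma> ` (S - {x})"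
        using injp injs xS unfolding A_def B_def inj_on_def by auto
      then show "card ((A - {\<pi> x}) \<inter> desc E c) = card ((B - {\<sigma> x}) \<inter> desc E c)"
        using bal[OF inj_on_subset[OF injp] inj_on_subset[OF injs] bal_other[OF xS rx c]] by auto
      show "\<not> {\<pi> x, \<sigma> x} \<subseteq> desc E c"
      proof
        assume "{\<pi> x, \<sigma> x} \<subseteq> desc E c"
        then have "(c, x) \<in> E\<^sup>*" using lca xS unfolding is_lca_def desc_def by auto
        then show False using not_in_child childE[OF c] by blast
      qed
    qed
    ultimately show ?thesis unfolding C3_def using xS by blast
  qed

  have F1: C1 if xS: "x \<notin> S" and nr: "\<not> requested E S \<pi> \<sigma> x"
  proof -
    have "card (A \<inter> desc E c) = card (B \<inter> desc E c)" if c: "c \<in> children E x" for c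
    proof -
      have "\<forall>s\<in>S. (\<pi> s \<in> desc E c \<longleftrightarrow> \<sigma> s \<in> desc E c)"
        using K c nr unfolding requested_def by blast
      then show ?thesis using bal[OF injp injs] unfolding A_def B_def by blast
    qed
    then show ?thesis unfolding C1_def using xS nr by blast
  qed

  have F2: C2 if xS: "x \<notin> S" and rq: "requested E S \<pi> \<sigma> x"
  proof -
    obtain s0 where s0: "s0 \<in> S" "s_requested E \<pi> \<sigma> s0 x" using rq unfolding requested_def by blast
    have s0x: "(s0, x) \<in> E\<^sup>*" and xo: "(x, \<pi> s0) \<in> E\<^sup>* \<or> (x, \<sigma> s0) \<in> E\<^sup>*" using sreq[OF s0(1)] s0 by auto
    have notboth: "\<not> ((x, \<pi> s0) \<in> E\<^sup>* \<and> (x, \<sigma> s0) \<in> E\<^sup>*)"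
    proof
      assume "(x, \<pi> s0) \<in> E\<^sup>* \<and> (x, \<sigma> s0) \<in> E\<^sup>*"
      then have "(x, s0) \<in> E\<^sup>*" using lca s0 unfolding is_lca_def by auto
      then have "x = s0" using antisym s0x by blast
      then show False using xS s0 by simp
    qed
    have Am: "A - {\<pi> s0} = \<pi> ` (S - {s0})" and Bm: "B - {\<sigma> s0} = \<sigma> ` (S - {s0})"
      using injp injs s0 unfolding A_def B_def inj_on_def by auto
    have nA: "\<sigma> s0 \<notin> A" and nB: "\<pi> s0 \<notin> B" using disj s0 unfolding A_def B_def by auto
    have bo: "card (\<pi> ` (S - {s0}) \<inter> desc E c) = card (\<sigma> ` (S - {s0}) \<inter> desc E c)"
      if c: "c \<in> children E x" for c
      using bal[OF inj_on_subset[OF injp] inj_on_subset[OF injs] bal_other[OF s0 c]] by auto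
    from xo show ?thesis
    proof
      assume xp: "(x, \<pi> s0) \<in> E\<^sup>*"
      have xs: "(x, \<sigma> s0) \<notin> E\<^sup>*" using xp notboth by blast
      have "card ((A - {\<pi> s0}) \<inter> desc E c) = card ((B - {\<pi> s0}) \<inter> desc E c)" if c: "c \<in> children E x" for c
      proof -
        have "(B - {\<pi> s0}) \<inter> desc E c = \<sigma> ` (S - {s0}) \<inter> desc E c"
          using nB xs child_sub[OF c] unfolding B_def by auto
        then show ?thesis using Am bo[OF c] by simp
      qed
      moreover have "\<pi> s0 \<in> (A \<union> B) \<inter> desc E x" "\<pi> s0 \<in> leaves V E"
        using xp s0 pl unfolding A_def desc_def by auto
      ultimately show ?thesis unfolding C2_def using xS rq by blast
    next
      assume xp: "(x, \<sigma> s0) \<in> E\<^sup>*"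
      have xs: "(x, \<pi> s0) \<notin> E\<^sup>*" using xp notboth by blast
      have "card ((A - {\<sigma> s0}) \<inter> desc E c) = card ((B - {\<sigma> s0}) \<inter> desc E c)" if c: "c \<in> children E x" for c
      proof -
        have "(A - {\<sigma> s0}) \<inter> desc E c = \<pi> ` (S - {s0}) \<inter> desc E c"
          using nA xs child_sub[OF c] unfolding A_def by auto
        then show ?thesis using Bm bo[OF c] by simp
      qed
      moreover have "\<sigma> s0 \<in> (A \<union> B) \<inter> desc E x" "\<sigma> s0 \<in> leaves V E"
        using xp s0 sl unfolding B_def desc_def by auto
      ultimately show ?thesis unfolding C2_def using xS rq by blast
    qed
  qed

  have all: "C1 \<or> C2 \<or> C3" using F1 F2 F3 by blast
  have ex: "\<not> (C1 \<and> C2) \<and> \<not> (C1 \<and> C3) \<and> \<not> (C2 \<and> C3)"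
    unfolding C1_def C2_def C3_def by blast
  have iff: "x \<in> S \<longleftrightarrow> (\<exists>a \<in> A \<inter> desc E x. \<exists>b \<in> B \<inter> desc E x.
               (\<forall>c \<in> children E x. card ((A - {a}) \<inter> desc E c) = card ((B - {b}) \<inter> desc E c)
                  \<and> \<not> {a, b} \<subseteq> desc E c))"
  proof
    assume "x \<in> S"
    then show "\<exists>a \<in> A \<inter> desc E x. \<exists>b \<in> B \<inter> desc E x.
               (\<forall>c \<in> children E x. card ((A - {a}) \<inter> desc E c) = card ((B - {b}) \<inter> desc E c)
                  \<and> \<not> {a, b} \<subseteq> desc E c)"
      using F3 unfolding C3_def by blast
  next
    assume "\<exists>a \<in> A \<inter> desc E x. \<exists>b \<in> B \<inter> desc E x.
               (\<forall>c \<in> children E x. card ((A - {a}) \<inter> desc E c) = card ((B - {b}) \<inter> desc E c)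
                  \<and> \<not> {a, b} \<subseteq> desc E c)"
    then obtain a b where a: "a \<in> A" "a \<in> desc E x" and b: "b \<in> B" "b \<in> desc E x"
      and H: "\<And>c. c \<in> children E x \<Longrightarrow> card ((A - {a}) \<inter> desc E c) = card ((B - {b}) \<inter> desc E c)
                  \<and> \<not> {a, b} \<subseteq> desc E c" by blast
    show "x \<in> S"
    proof (rule ccontr)
      assume xS: "x \<notin> S"
      have "a \<noteq> x" "b \<noteq> x" using a b pl sl xnl unfolding A_def B_def by auto
      then obtain c0 c1 where c0: "(x, c0) \<in> E" "(c0, a) \<in> E\<^sup>*" and c1: "(x, c1) \<in> E" "(c1, b) \<in> E\<^sup>*"
        using desc_split a b unfolding desc_def by blast
      have c0c: "c0 \<in> children E x" and c1c: "c1 \<in> children E x" using c0 c1 unfolding children_def by auto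
      have ad: "a \<in> desc E c0" and bd: "b \<in> desc E c1" using c0 c1 unfolding desc_def by auto
      have bn: "b \<notin> desc E c0" using H[OF c0c] ad by auto
      have cne: "c0 \<noteq> c1" using bn bd by auto
      have dj: "desc E c0 \<inter> desc E c1 = {}"
        using child_disj[OF c0(1) c1(1) cne] unfolding desc_def by blast
      show False
      proof (cases "requested E S \<pi> \<sigma> x")
        case False
        then have "C1" using F1 xS by blast
        then have "card (A \<inter> desc E c0) = card (B \<inter> desc E c0)" using c0c unfolding C1_def by blast
        then show False using L0[OF finA a(1) ad bn] H[OF c0c] by blast
      next
        case True
        then have "C2" using F2 xS by blast
        then obtain z where z: "z \<in> A \<union> B"
          and Hz: "\<And>c. c \<in> children E x \<Longrightarrow> card ((A - {z}) \<inter> desc E c) = card ((B - {z}) \<inter> desc E c)"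
          unfolding C2_def by blast
        show False
        proof (cases "z \<in> A")
          case True
          then have "z \<notin> B" using disj by auto
          then show False using LA[OF finA finB dj a(1) ad b(1) bd True] H[OF c0c] H[OF c1c] Hz[OF c0c] Hz[OF c1c]
            by blast
        next
          case False
          then have zB: "z \<in> B" using z by auto
          have dj': "desc E c1 \<inter> desc E c0 = {}" using dj by auto
          show False using LA[OF finB finA dj' b(1) bd a(1) ad zB False] H[OF c0c] H[OF c1c] Hz[OF c0c] Hz[OF c1c]
            by (metis (no_types, lifting))
        qed
      qed
    qed
  qed
  show ?thesis using all ex iff by blast
qed

end
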